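(* Let $\mathsf{A}$ and $\mathsf{B}$ be density matrices on the same finite-dimensional complex Hilbert space with $\operatorname{rank}(\mathsf{A}) = \operatorname{rank}(\mathsf{B})$, and let $k \in [0,1]$. Then $$\mathsf{A} \sqsubseteq_k \mathsf{B} \iff \neg_{supp}\mathsf{B} \sqsubseteq_k \neg_{supp}\mathsf{A}.$$
   Context: A density matrix is a positive semidefinite Hermitian matrix of trace $1$. A Hermitian matrix $M$ is called positive, written $M \geq 0$, if it is positive semidefinite. For Hermitian matrices $\mathsf{X}, \mathsf{Y}$ and a real number $k \in [0,1]$, $k$-hyponymy is defined by $\mathsf{X} \sqsubseteq_k \mathsf{Y}$ iff $\mathsf{Y} - k\mathsf{X} \geq 0$. The support inverse of a positive semidefinite matrix $\mathsf{X}$ with spectral decomposition $\mathsf{X} = \sum_i \lambda_i |i\rangle\langle i|$ (orthonormal eigenbasis $\{|i\rangle\}$) is $\neg_{supp}\mathsf{X} = \sum_{i:\lambda_i \neq 0} \lambda_i^{-1} |i\rangle\langle i|$, i.e. the Moore–Penrose pseudoinverse of $\mathsf{X}$; it has the same eigenbasis as $\mathsf{X}$, inverts the nonzero eigenvalues, and is zero on the kernel of $\mathsf{X}$. *)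

theory Defs
  imports "Jordan_Normal_Form.Schur_Decomposition" "Jordan_Normal_Form.DL_Rank"
begin

definition ctrans :: "complex mat \<Rightarrow> complex mat" where
  "ctrans A = mat (dim_col A) (dim_row A) (\<lambda>(i,j). cnj (A $$ (j,i)))"

definition hermitian_mat :: "nat \<Rightarrow> complex mat \<Rightarrow> bool" where
  "hermitian_mat n M \<longleftrightarrow> M \<in> carrier_mat n n \<and> ctrans M = M"

definition psd_mat :: "nat \<Rightarrow> complex mat \<Rightarrow> bool" where
  "psd_mat n M \<longleftrightarrow> hermitian_mat n M \<and>
     (\<forall>v \<in> carrier_vec n. let q = conjugate v \<bullet> (M *\<^sub>v v) in Im q = 0 \<and> Re q \<ge> 0)"

definition mat_trace :: "complex mat \<Rightarrow> complex" where
  "mat_trace M = (\<Sum>i<dim_row M. M $$ (i,i))"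

definition density_mat :: "nat \<Rightarrow> complex mat \<Rightarrow> bool" where
  "density_mat n M \<longleftrightarrow> psd_mat n M \<and> mat_trace M = 1"

definition k_hyponym :: "nat \<Rightarrow> real \<Rightarrow> complex mat \<Rightarrow> complex mat \<Rightarrow> bool" where
  "k_hyponym n k X Y \<longleftrightarrow> psd_mat n (Y - complex_of_real k \<cdot>\<^sub>m X)"

definition unitary_mat :: "nat \<Rightarrow> complex mat \<Rightarrow> bool" where
  "unitary_mat n U \<longleftrightarrow> U \<in> carrier_mat n n \<and> U * ctrans U = 1\<^sub>m n \<and> ctrans U * U = 1\<^sub>m n"

definition diag_supp_inv :: "complex mat \<Rightarrow> complex mat" where
  "diag_supp_inv D = mat (dim_row D) (dim_col D)
     (\<lambda>(i,j). if i = j \<and> D $$ (i,i) \<noteq> 0 then inverse (D $$ (i,i)) else 0)"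

definition supp_inv :: "nat \<Rightarrow> complex mat \<Rightarrow> complex mat" where
  "supp_inv n X = (THE Y. \<exists>U D. unitary_mat n U \<and> D \<in> carrier_mat n n \<and> diagonal_mat D \<and>
       X = U * D * ctrans U \<and> Y = U * diag_supp_inv D * ctrans U)"

definition mat_rank :: "nat \<Rightarrow> complex mat \<Rightarrow> nat" where
  "mat_rank n A = vec_space.rank n A"

end

theory Submission
  imports Defs
begin


lemma ctrans_dims[simp]: "dim_row (ctrans A) = dim_col A" "dim_col (ctrans A) = dim_row A"
  by (auto simp: ctrans_def)

lemma ctrans_index[simp]: "i < dim_col A \<Longrightarrow> j < dim_row A \<Longrightarrow> ctrans A $$ (i,j) = cnj (A $$ (j,i))"
  by (auto simp: ctrans_def)

lemma ctrans_carrier[simp]: "A \<in> carrier_mat n m \<Longrightarrow> ctrans A \<in> carrier_mat m n"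
  by (metis carrier_matD carrier_matI ctrans_dims)

lemma ctrans_ctrans[simp]: "ctrans (ctrans A) = A"
  by (rule eq_matI, auto)

lemma ctrans_mult: assumes "A \<in> carrier_mat n k" "B \<in> carrier_mat k m"
  shows "ctrans (A * B) = ctrans B * ctrans A"
  using assms by (intro eq_matI) (auto simp: scalar_prod_def row_def col_def intro!: sum.cong)

lemma ctrans_add: assumes "A \<in> carrier_mat n m" "B \<in> carrier_mat n m"
  shows "ctrans (A + B) = ctrans A + ctrans B"
  using assms by (intro eq_matI) auto

lemma ctrans_minus: assumes "A \<in> carrier_mat n m" "B \<in> carrier_mat n m"
  shows "ctrans (A - B) = ctrans A - ctrans B"
  using assms by (intro eq_matI) auto

lemma ctrans_smult_real: "ctrans (complex_of_real k \<cdot>\<^sub>m A) = complex_of_real k \<cdot>\<^sub>m ctrans A"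
  by (intro eq_matI) auto

lemma ctrans_one[simp]: "ctrans (1\<^sub>m n) = 1\<^sub>m n"
  by (intro eq_matI) auto

lemma ctrans_zero[simp]: "ctrans (0\<^sub>m n m) = 0\<^sub>m m n"
  by (intro eq_matI) auto

lemma ctrans_mult_vec: assumes B: "B \<in> carrier_mat n m" and v: "v \<in> carrier_vec m" and w: "w \<in> carrier_vec n"
  shows "conjugate v \<bullet> (ctrans B *\<^sub>v w) = conjugate (B *\<^sub>v v) \<bullet> w"
proof -
  have "conjugate v \<bullet> (ctrans B *\<^sub>v w) = (\<Sum>i<m. cnj (v$i) * (\<Sum>j<n. cnj (B $$ (j,i)) * w $ j))"
    using assms by (simp add: scalar_prod_def mult_mat_vec_def row_def lessThan_atLeast0)
  also have "\<dots> = (\<Sum>i<m. \<Sum>j<n. cnj (v$i) * cnj (B $$ (j,i)) * w $ j)"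
    by (simp add: sum_distrib_left mult.assoc)
  also have "\<dots> = (\<Sum>j<n. \<Sum>i<m. cnj (v$i) * cnj (B $$ (j,i)) * w $ j)"
    by (rule sum.swap)
  also have "\<dots> = (\<Sum>j<n. cnj (\<Sum>i<m. B $$ (j,i) * v $ i) * w $ j)"
    by (simp add: sum_distrib_left mult_ac)
  also have "\<dots> = conjugate (B *\<^sub>v v) \<bullet> w"
    using assms by (simp add: scalar_prod_def mult_mat_vec_def row_def lessThan_atLeast0)
  finally show ?thesis .
qed

definition qf :: "complex mat \<Rightarrow> complex vec \<Rightarrow> complex" where
  "qf M v = conjugate v \<bullet> (M *\<^sub>v v)"

lemma psd_mat_qf: "psd_mat n M \<longleftrightarrow> hermitian_mat n M \<and> (\<forall>v \<in> carrier_vec n. Im (qf M v) = 0 \<and> Re (qf M v) \<ge> 0)"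
  by (simp add: psd_mat_def qf_def Let_def)

lemma qf_congr: assumes B: "B \<in> carrier_mat n n" and M: "M \<in> carrier_mat n n" and v: "v \<in> carrier_vec n"
  shows "qf (ctrans B * M * B) v = qf M (B *\<^sub>v v)"
proof -
  have cB: "ctrans B \<in> carrier_mat n n" using B by simp
  have "(ctrans B * M * B) *\<^sub>v v = (ctrans B * M) *\<^sub>v (B *\<^sub>v v)"
    using assms cB by (intro assoc_mult_mat_vec[of _ n n]) auto
  also have "\<dots> = ctrans B *\<^sub>v (M *\<^sub>v (B *\<^sub>v v))"
    using assms cB by (intro assoc_mult_mat_vec[of _ n n]) auto
  finally have "(ctrans B * M * B) *\<^sub>v v = ctrans B *\<^sub>v (M *\<^sub>v (B *\<^sub>v v))" .
  then show ?thesis unfolding qf_def using assms by (simp add: ctrans_mult_vec)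
qed

lemma qf_add: assumes "M \<in> carrier_mat n n" "N \<in> carrier_mat n n" "v \<in> carrier_vec n"
  shows "qf (M + N) v = qf M v + qf N v"
  using assms unfolding qf_def
  by (simp add: add_mult_distrib_mat_vec scalar_prod_add_distrib[of _ n])

lemma smult_mat_vec: assumes "M \<in> carrier_mat n m" "v \<in> carrier_vec m"
  shows "(c \<cdot>\<^sub>m M) *\<^sub>v v = c \<cdot>\<^sub>v (M *\<^sub>v v)"
  using assms by (intro eq_vecI) (auto simp: scalar_prod_def sum_distrib_left mult.assoc)

lemma qf_smult: assumes "M \<in> carrier_mat n n" "v \<in> carrier_vec n"
  shows "qf (c \<cdot>\<^sub>m M) v = c * qf M v"
  using assms unfolding qf_def by (simp add: smult_mat_vec[of _ n n])

lemma qf_minus: assumes M: "M \<in> carrier_mat n n" and N: "N \<in> carrier_mat n n" and v: "v \<in> carrier_vec n"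
  shows "qf (M - N) v = qf M v - qf N v"
proof -
  have "(M - N) *\<^sub>v v = M *\<^sub>v v - N *\<^sub>v v" by (rule minus_mult_distrib_mat_vec[OF M N v])
  then show ?thesis unfolding qf_def
    using scalar_prod_minus_distrib[of "conjugate v" n "M *\<^sub>v v" "N *\<^sub>v v"] M N v by simp
qed

lemma psd_carrier: "psd_mat n M \<Longrightarrow> M \<in> carrier_mat n n"
  by (simp add: psd_mat_def hermitian_mat_def)

lemma psd_herm: "psd_mat n M \<Longrightarrow> ctrans M = M"
  by (simp add: psd_mat_def hermitian_mat_def)

lemma psdI: assumes "M \<in> carrier_mat n n" "ctrans M = M"
  "\<And>v. v \<in> carrier_vec n \<Longrightarrow> Im (qf M v) = 0" "\<And>v. v \<in> carrier_vec n \<Longrightarrow> Re (qf M v) \<ge> 0"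
  shows "psd_mat n M"
  using assms unfolding psd_mat_qf hermitian_mat_def by blast

lemma psdD: assumes "psd_mat n M" "v \<in> carrier_vec n"
  shows "Im (qf M v) = 0" "Re (qf M v) \<ge> 0"
  using assms unfolding psd_mat_qf by auto

lemma psd_congr: assumes M: "psd_mat n M" and B: "B \<in> carrier_mat n n"
  shows "psd_mat n (ctrans B * M * B)"
proof (rule psdI)
  have Mc: "M \<in> carrier_mat n n" using psd_carrier[OF M] .
  have cB: "ctrans B \<in> carrier_mat n n" using B by simp
  show "ctrans B * M * B \<in> carrier_mat n n" using Mc B cB by (intro mult_carrier_mat[of _ n n]) auto
  have "ctrans (ctrans B * M * B) = ctrans B * ctrans (ctrans B * M)"
    by (rule ctrans_mult[of _ n n _ n]) (use Mc B in auto)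
  also have "ctrans (ctrans B * M) = ctrans M * ctrans (ctrans B)"
    by (rule ctrans_mult[of _ n n _ n]) (use Mc B in auto)
  also have "ctrans B * (ctrans M * ctrans (ctrans B)) = ctrans B * M * B"
    using psd_herm[OF M] Mc B cB by (simp add: assoc_mult_mat[of _ n n _ n _ n])
  finally show "ctrans (ctrans B * M * B) = ctrans B * M * B" .
  fix v :: "complex vec" assume v: "v \<in> carrier_vec n"
  have Bv: "B *\<^sub>v v \<in> carrier_vec n" using B v by simp
  show "Im (qf (ctrans B * M * B) v) = 0" "Re (qf (ctrans B * M * B) v) \<ge> 0"
    unfolding qf_congr[OF B Mc v] using psdD[OF M Bv] by auto
qed

lemma psd_add: assumes M: "psd_mat n M" and N: "psd_mat n N"
  shows "psd_mat n (M + N)"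
proof (rule psdI)
  have Mc: "M \<in> carrier_mat n n" using psd_carrier[OF M] .
  have Nc: "N \<in> carrier_mat n n" using psd_carrier[OF N] .
  show "M + N \<in> carrier_mat n n" using Mc Nc by simp
  show "ctrans (M + N) = M + N" using ctrans_add[OF Mc Nc] psd_herm[OF M] psd_herm[OF N] by simp
  fix v :: "complex vec" assume v: "v \<in> carrier_vec n"
  show "Im (qf (M + N) v) = 0" "Re (qf (M + N) v) \<ge> 0"
    unfolding qf_add[OF Mc Nc v] using psdD[OF M v] psdD[OF N v] by auto
qed

lemma psd_smult: assumes M: "psd_mat n M" and k: "k \<ge> 0"
  shows "psd_mat n (complex_of_real k \<cdot>\<^sub>m M)"
proof (rule psdI)
  have Mc: "M \<in> carrier_mat n n" using psd_carrier[OF M] .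
  show "complex_of_real k \<cdot>\<^sub>m M \<in> carrier_mat n n" using Mc by simp
  show "ctrans (complex_of_real k \<cdot>\<^sub>m M) = complex_of_real k \<cdot>\<^sub>m M"
    using ctrans_smult_real psd_herm[OF M] by simp
  fix v :: "complex vec" assume v: "v \<in> carrier_vec n"
  show "Im (qf (complex_of_real k \<cdot>\<^sub>m M) v) = 0" "Re (qf (complex_of_real k \<cdot>\<^sub>m M) v) \<ge> 0"
    unfolding qf_smult[OF Mc v] using psdD[OF M v] k by auto
qed



lemma orthonormal_completion:
  fixes v :: "complex vec"
  assumes v: "v \<in> carrier_vec n" and v0: "v \<noteq> 0\<^sub>v n"
  shows "\<exists>W c. W \<in> carrier_mat n n \<and> ctrans W * W = 1\<^sub>m n \<and> col W 0 = c \<cdot>\<^sub>v v"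
proof -
  interpret cof_vec_space n "TYPE(complex)" .
  define b where "b = basis_completion v"
  from basis_completion[OF v v0, folded b_def]
  have b: "set b \<subseteq> carrier_vec n" "distinct b" "\<not> lin_dep (set b)" "length b = n" "hd b = v"
    by auto
  define ws where "ws = gram_schmidt n b"
  from gram_schmidt_result[OF b(1) b(2) b(3) ws_def] b(4)
  have ws: "corthogonal ws" "set ws \<subseteq> carrier_vec n" "length ws = n" by auto
  have n0: "n > 0"
  proof (rule ccontr)
    assume "\<not> n > 0"
    then have "n = 0" by simp
    then have "v = 0\<^sub>v n" using v by (intro eq_vecI) auto
    then show False using v0 by simp
  qed
  obtain vs where bv: "b = v # vs" using b(4) b(5) n0 by (cases b) auto
  have "hd ws = v" unfolding ws_def bv by (rule gram_schmidt_hd[OF v])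
  then have hd: "ws ! 0 = v" using ws(3) n0 by (cases ws) auto
  have wsi: "ws ! i \<in> carrier_vec n" if "i < n" for i using ws that by auto
  define r where "r i = Re (ws!i \<bullet>c ws!i)" for i
  have r: "ws!i \<bullet>c ws!i = complex_of_real (r i) \<and> r i > 0" if i: "i < n" for i
  proof -
    have ge: "0 \<le> ws!i \<bullet>c ws!i" by (rule conjugate_square_ge_0_vec)
    have ne: "ws!i \<bullet>c ws!i \<noteq> 0" using corthogonalD[OF ws(1), of i i] i ws(3) by auto
    from ge have "Im (ws!i \<bullet>c ws!i) = 0" "Re (ws!i \<bullet>c ws!i) \<ge> 0"
      by (auto simp: less_eq_complex_def)
    with ne show ?thesis unfolding r_def by (auto simp: complex_eq_iff)
  qed
  define us where "us = map (\<lambda>i. complex_of_real (1 / sqrt (r i)) \<cdot>\<^sub>v ws!i) [0..<n]"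
  define W where "W = mat_of_cols n us"
  have us_len: "length us = n" unfolding us_def by simp
  have us_nth: "us ! i = complex_of_real (1 / sqrt (r i)) \<cdot>\<^sub>v ws!i" if "i < n" for i
    unfolding us_def using that by simp
  have Wc: "W \<in> carrier_mat n n" unfolding W_def using mat_of_cols_carrier(1)[of n us] us_len by simp
  have Wij: "W $$ (l, i) = complex_of_real (1 / sqrt (r i)) * ws!i $ l" if "l < n" "i < n" for l i
    unfolding W_def using that us_len us_nth[OF that(2)] wsi[OF that(2)] by (simp add: mat_of_cols_index)
  have "ctrans W * W = 1\<^sub>m n"
  proof (rule eq_matI)
    fix i j assume i: "i < dim_row (1\<^sub>m n)" and j: "j < dim_col (1\<^sub>m n)"
    then have i: "i < n" and j: "j < n" by auto
    have "(ctrans W * W) $$ (i,j) = (\<Sum>l<n. cnj (W $$ (l,i)) * W $$ (l,j))"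
      using Wc i j by (simp add: scalar_prod_def lessThan_atLeast0)
    also have "\<dots> = (\<Sum>l<n. complex_of_real (1 / sqrt (r i)) * complex_of_real (1 / sqrt (r j)) * (ws!j $ l * cnj (ws!i $ l)))"
      using i j by (intro sum.cong) (auto simp: Wij)
    also have "\<dots> = complex_of_real (1 / sqrt (r i)) * complex_of_real (1 / sqrt (r j)) * (ws!j \<bullet>c ws!i)"
      using wsi[OF i] wsi[OF j] by (simp add: scalar_prod_def sum_distrib_left lessThan_atLeast0)
    also have "\<dots> = 1\<^sub>m n $$ (i,j)"
    proof (cases "i = j")
      case True
      have "sqrt (r i) * sqrt (r i) = r i" using r[OF i] by simp
      then show ?thesis using True r[OF i] i
        by (simp add: field_simps of_real_mult[symmetric] del: of_real_mult)
    next
      case False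
      then have "ws!j \<bullet>c ws!i = 0" using corthogonalD[OF ws(1), of j i] i j ws(3) by auto
      then show ?thesis using False i j by simp
    qed
    finally show "(ctrans W * W) $$ (i,j) = 1\<^sub>m n $$ (i,j)" .
  qed (use Wc in auto)
  moreover have "col W 0 = complex_of_real (1 / sqrt (r 0)) \<cdot>\<^sub>v v"
    unfolding W_def using n0 us_len us_nth[OF n0] hd by (subst col_mat_of_cols) (use wsi[OF n0] v in auto)
  ultimately show ?thesis using Wc by blast
qed



lemma unitary_from_left: assumes "U \<in> carrier_mat n n" "ctrans U * U = 1\<^sub>m n"
  shows "unitary_mat n U"
  using assms mat_mult_left_right_inverse[of "ctrans U" n U] unfolding unitary_mat_def by auto

lemma herm_congr: assumes M: "M \<in> carrier_mat n n" and h: "ctrans M = M" and B: "B \<in> carrier_mat n m"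
  shows "ctrans (ctrans B * M * B) = ctrans B * M * B"
proof -
  have cB: "ctrans B \<in> carrier_mat m n" using B by simp
  have "ctrans (ctrans B * M * B) = ctrans B * ctrans (ctrans B * M)"
    by (rule ctrans_mult[of _ m n _ m]) (use M B cB in auto)
  also have "ctrans (ctrans B * M) = ctrans M * ctrans (ctrans B)"
    by (rule ctrans_mult[of _ m n _ n]) (use M B cB in auto)
  also have "ctrans B * (ctrans M * ctrans (ctrans B)) = ctrans B * M * B"
    using h M B cB by (simp add: assoc_mult_mat[of _ m n _ n _ m])
  finally show ?thesis .
qed

lemma ctrans_fb: assumes A: "A \<in> carrier_mat n1 n1" and D: "D \<in> carrier_mat n2 n2"
  shows "ctrans (four_block_mat A (0\<^sub>m n1 n2) (0\<^sub>m n2 n1) D) = four_block_mat (ctrans A) (0\<^sub>m n1 n2) (0\<^sub>m n2 n1) (ctrans D)"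
  using A D by (intro eq_matI) auto

lemma mult_fb: assumes A1: "A1 \<in> carrier_mat n1 n1" and D1: "D1 \<in> carrier_mat n2 n2"
  and A2: "A2 \<in> carrier_mat n1 n1" and D2: "D2 \<in> carrier_mat n2 n2"
  shows "four_block_mat A1 (0\<^sub>m n1 n2) (0\<^sub>m n2 n1) D1 * four_block_mat A2 (0\<^sub>m n1 n2) (0\<^sub>m n2 n1) D2
    = four_block_mat (A1 * A2) (0\<^sub>m n1 n2) (0\<^sub>m n2 n1) (D1 * D2)"
  by (subst mult_four_block_mat[OF A1 _ _ D1 A2 _ _ D2]) (use A1 A2 D1 D2 in auto)

lemma exists_eigen: assumes A: "(A :: complex mat) \<in> carrier_mat n n" and n: "n > 0"
  shows "\<exists>e v. v \<in> carrier_vec n \<and> v \<noteq> 0\<^sub>v n \<and> A *\<^sub>v v = e \<cdot>\<^sub>v v"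
proof -
  obtain as where cp: "char_poly A = (\<Prod>a\<leftarrow>as. [:- a, 1:])" and len: "length as = n"
    using char_poly_factorized[OF A] by blast
  obtain e rest where as: "as = e # rest" using len n by (cases as) auto
  have "poly (char_poly A) e = 0" unfolding cp as by simp
  then have "eigenvalue A e" using eigenvalue_root_char_poly[OF A] by simp
  then show ?thesis using A unfolding eigenvalue_def eigenvector_def by auto
qed

lemma spectral:
  "(A :: complex mat) \<in> carrier_mat n n \<Longrightarrow> ctrans A = A \<Longrightarrow>
   \<exists>U D. unitary_mat n U \<and> D \<in> carrier_mat n n \<and> diagonal_mat D \<and> A = U * D * ctrans U"
proof (induction n arbitrary: A)
  case 0
  have "A = 1\<^sub>m 0 * A * ctrans (1\<^sub>m 0)" using 0 by simp
  moreover have "unitary_mat 0 (1\<^sub>m 0)" unfolding unitary_mat_def by simp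
  moreover have "diagonal_mat A" using 0 unfolding diagonal_mat_def by auto
  ultimately show ?case using 0 by blast
next
  case (Suc m A)
  define n where "n = Suc m"
  have A: "A \<in> carrier_mat n n" and hA: "ctrans A = A" using Suc n_def by auto
  obtain e v where v: "v \<in> carrier_vec n" and v0: "v \<noteq> 0\<^sub>v n" and ev: "A *\<^sub>v v = e \<cdot>\<^sub>v v"
    using exists_eigen[OF A] n_def by auto
  obtain W c where W: "W \<in> carrier_mat n n" and WW: "ctrans W * W = 1\<^sub>m n" and Wc: "col W 0 = c \<cdot>\<^sub>v v"
    using orthonormal_completion[OF v v0] by blast
  have cW: "ctrans W \<in> carrier_mat n n" using W by simp
  have WW': "W * ctrans W = 1\<^sub>m n" using mat_mult_left_right_inverse[OF cW W WW] .
  define A' where "A' = ctrans W * A * W"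
  have A': "A' \<in> carrier_mat n n" unfolding A'_def using W cW A by (intro mult_carrier_mat[of _ n n]) auto
  have hA': "ctrans A' = A'" unfolding A'_def by (rule herm_congr[OF A hA W])
  have "col A' 0 = (ctrans W * A) *\<^sub>v col W 0" unfolding A'_def
    by (rule col_mult2[of _ n n]) (use W cW A n_def in auto)
  also have "\<dots> = ctrans W *\<^sub>v (A *\<^sub>v (c \<cdot>\<^sub>v v))" unfolding Wc
    by (rule assoc_mult_mat_vec[of _ n n]) (use W cW A v in auto)
  also have "A *\<^sub>v (c \<cdot>\<^sub>v v) = c \<cdot>\<^sub>v (e \<cdot>\<^sub>v v)" using mult_mat_vec[OF A v] ev by simp
  also have "c \<cdot>\<^sub>v (e \<cdot>\<^sub>v v) = e \<cdot>\<^sub>v (c \<cdot>\<^sub>v v)" by (simp add: smult_smult_assoc mult.commute)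
  also have "ctrans W *\<^sub>v (e \<cdot>\<^sub>v (c \<cdot>\<^sub>v v)) = e \<cdot>\<^sub>v (ctrans W *\<^sub>v col W 0)"
    unfolding Wc using mult_mat_vec[OF cW, of "c \<cdot>\<^sub>v v" e] v by simp
  also have "ctrans W *\<^sub>v col W 0 = col (ctrans W * W) 0"
    by (rule col_mult2[symmetric, of _ n n]) (use W cW n_def in auto)
  also have "\<dots> = unit_vec n 0" unfolding WW using n_def by simp
  finally have colA': "col A' 0 = e \<cdot>\<^sub>v unit_vec n 0" .
  have c0: "A' $$ (i,0) = (if i = 0 then e else 0)" if "i < n" for i
  proof -
    have "A' $$ (i,0) = col A' 0 $ i" using A' that n_def by simp
    then show ?thesis unfolding colA' using that n_def by simp
  qed
  have r0: "A' $$ (0,j) = (if j = 0 then cnj e else 0)" if "j < n" for j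
  proof -
    have "A' $$ (0,j) = ctrans A' $$ (0,j)" using hA' by simp
    also have "\<dots> = cnj (A' $$ (j,0))" using A' that n_def by simp
    finally show ?thesis using c0[OF that] by simp
  qed
  have ee: "cnj e = e" using c0[of 0] r0[of 0] n_def by simp
  define A3 where "A3 = mat m m (\<lambda>(i,j). A' $$ (Suc i, Suc j))"
  have A3: "A3 \<in> carrier_mat m m" unfolding A3_def by simp
  have hA3: "ctrans A3 = A3"
  proof (rule eq_matI)
    fix i j assume "i < dim_row A3" "j < dim_col A3"
    then have i: "i < m" and j: "j < m" using A3 by auto
    have "ctrans A3 $$ (i,j) = cnj (A' $$ (Suc j, Suc i))" using i j A3 by (simp add: A3_def)
    also have "\<dots> = ctrans A' $$ (Suc i, Suc j)" using i j A' n_def by simp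
    also have "\<dots> = A3 $$ (i,j)" using hA' i j by (simp add: A3_def)
    finally show "ctrans A3 $$ (i,j) = A3 $$ (i,j)" .
  qed (use A3 in auto)
  define E where "E = mat 1 1 (\<lambda>_. e)"
  have E: "E \<in> carrier_mat 1 1" unfolding E_def by simp
  have blockA': "A' = four_block_mat E (0\<^sub>m 1 m) (0\<^sub>m m 1) A3"
  proof (rule eq_matI)
    fix i j assume "i < dim_row (four_block_mat E (0\<^sub>m 1 m) (0\<^sub>m m 1) A3)"
      "j < dim_col (four_block_mat E (0\<^sub>m 1 m) (0\<^sub>m m 1) A3)"
    then have i: "i < n" and j: "j < n" using E A3 n_def by auto
    show "A' $$ (i,j) = four_block_mat E (0\<^sub>m 1 m) (0\<^sub>m m 1) A3 $$ (i,j)"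
    proof (cases "i = 0")
      case True
      then show ?thesis using r0[OF j] ee i j E A3 n_def by (auto simp: E_def)
    next
      case False
      show ?thesis
      proof (cases "j = 0")
        case True
        then show ?thesis using c0[OF i] False i j E A3 n_def by (auto simp: E_def)
      next
        case False2: False
        then obtain i' j' where "i = Suc i'" "j = Suc j'" using False by (cases i; cases j) auto
        then show ?thesis using i j E A3 n_def by (auto simp: A3_def)
      qed
    qed
  qed (use E A3 A' n_def in auto)
  obtain U3 D3 where U3: "unitary_mat m U3" and D3: "D3 \<in> carrier_mat m m" and dD3: "diagonal_mat D3"
    and A3eq: "A3 = U3 * D3 * ctrans U3"
    using Suc.IH[OF A3 hA3] by blast
  have U3c: "U3 \<in> carrier_mat m m" and U3U: "ctrans U3 * U3 = 1\<^sub>m m"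
    using U3 unfolding unitary_mat_def by auto
  have cU3: "ctrans U3 \<in> carrier_mat m m" using U3c by simp
  define F where "F = four_block_mat (1\<^sub>m 1) (0\<^sub>m 1 m) (0\<^sub>m m 1) U3"
  define D where "D = four_block_mat E (0\<^sub>m 1 m) (0\<^sub>m m 1) D3"
  have F: "F \<in> carrier_mat n n" unfolding F_def using U3c n_def by auto
  have D: "D \<in> carrier_mat n n" unfolding D_def using D3 E n_def by auto
  have cF: "ctrans F = four_block_mat (1\<^sub>m 1) (0\<^sub>m 1 m) (0\<^sub>m m 1) (ctrans U3)"
    unfolding F_def by (subst ctrans_fb) (use U3c in auto)
  have cFc: "ctrans F \<in> carrier_mat n n" using F by simp
  have FF: "ctrans F * F = 1\<^sub>m n"
    unfolding cF unfolding F_def by (subst mult_fb) (use U3c cU3 U3U n_def in auto)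
  have FD: "F * D = four_block_mat E (0\<^sub>m 1 m) (0\<^sub>m m 1) (U3 * D3)"
    unfolding F_def D_def by (subst mult_fb) (use U3c D3 E in auto)
  have FDF: "F * D * ctrans F = A'"
    unfolding FD cF unfolding blockA' A3eq by (subst mult_fb) (use U3c D3 E cU3 in auto)
  define U where "U = W * F"
  have U: "U \<in> carrier_mat n n" unfolding U_def using W F by simp
  have cU: "ctrans U = ctrans F * ctrans W" unfolding U_def by (rule ctrans_mult[OF W F])
  have mc: "\<And>X Y. X \<in> carrier_mat n n \<Longrightarrow> Y \<in> carrier_mat n n \<Longrightarrow> X * Y \<in> carrier_mat n n"
    by simp
  have WWF: "ctrans W * (W * F) = F"
    using assoc_mult_mat[OF cW W F, symmetric] WW F by simp
  have "ctrans U * U = ctrans F * (ctrans W * (W * F))"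
    unfolding cU unfolding U_def using W F cW cFc
    by (simp add: mc assoc_mult_mat[of _ n n _ n _ n])
  also have "\<dots> = 1\<^sub>m n" unfolding WWF using FF by simp
  finally have uU: "unitary_mat n U" by (rule unitary_from_left[OF U])
  have "U * D * ctrans U = W * (F * (D * (ctrans F * ctrans W)))"
    unfolding cU unfolding U_def using W F cW cFc D
    by (simp add: mc assoc_mult_mat[of _ n n _ n _ n])
  also have "\<dots> = W * ((F * D * ctrans F) * ctrans W)"
    using W F cW cFc D by (simp add: mc assoc_mult_mat[of _ n n _ n _ n])
  also have "\<dots> = W * (ctrans W * (A * (W * ctrans W)))"
    unfolding FDF A'_def using W cW A
    by (simp add: mc assoc_mult_mat[of _ n n _ n _ n])
  also have "\<dots> = W * (ctrans W * A)" unfolding WW' using A by simp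
  also have "\<dots> = (W * ctrans W) * A" using assoc_mult_mat[OF W cW A] by simp
  also have "\<dots> = A" unfolding WW' using A by simp
  finally have AUD: "A = U * D * ctrans U" by simp
  have dD: "diagonal_mat D"
    unfolding diagonal_mat_def
  proof (intro allI impI)
    fix i j assume ij: "i < dim_row D" "j < dim_col D" "i \<noteq> j"
    then have i: "i < n" and j: "j < n" using D by auto
    show "D $$ (i,j) = 0"
    proof (cases "i = 0 \<or> j = 0")
      case True
      then show ?thesis using ij i j E D3 n_def by (auto simp: D_def E_def)
    next
      case False
      then obtain i' j' where ij': "i = Suc i'" "j = Suc j'" by (cases i; cases j) auto
      then have "D3 $$ (i',j') = 0" using dD3 D3 ij i j n_def unfolding diagonal_mat_def by auto
      then show ?thesis using ij' i j E D3 n_def by (auto simp: D_def E_def)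
    qed
  qed
  show ?case using uU D dD AUD n_def by blast
qed



lemma diag_mult_index: assumes X: "diagonal_mat X" "X \<in> carrier_mat n n" and Y: "Y \<in> carrier_mat n m"
  and i: "i < n" and j: "j < m"
  shows "(X * Y) $$ (i,j) = X $$ (i,i) * Y $$ (i,j)"
proof -
  have "(X * Y) $$ (i,j) = (\<Sum>k<n. X $$ (i,k) * Y $$ (k,j))"
    using X Y i j by (simp add: scalar_prod_def lessThan_atLeast0)
  also have "\<dots> = (\<Sum>k<n. if k = i then X $$ (i,i) * Y $$ (i,j) else 0)"
    using X i unfolding diagonal_mat_def by (intro sum.cong) auto
  also have "\<dots> = X $$ (i,i) * Y $$ (i,j)" using i by simp
  finally show ?thesis .
qed

lemma mult_sq_carrier[simp]: "A \<in> carrier_mat n n \<Longrightarrow> B \<in> carrier_mat n n \<Longrightarrow> A * B \<in> carrier_mat n n"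
  by simp

lemma ctrans_sq_carrier[simp]: "A \<in> carrier_mat n n \<Longrightarrow> ctrans A \<in> carrier_mat n n"
  by simp

abbreviation dsi where "dsi \<equiv> diag_supp_inv"

lemma dsi_dims[simp]: "dim_row (dsi D) = dim_row D" "dim_col (dsi D) = dim_col D"
  by (auto simp: diag_supp_inv_def)

lemma dsi_index[simp]: "i < dim_row D \<Longrightarrow> j < dim_col D \<Longrightarrow>
  dsi D $$ (i,j) = (if i = j \<and> D $$ (i,i) \<noteq> 0 then inverse (D $$ (i,i)) else 0)"
  by (auto simp: diag_supp_inv_def)

lemma dsi_carrier[simp]: "D \<in> carrier_mat n m \<Longrightarrow> dsi D \<in> carrier_mat n m"
  by (metis carrier_matD carrier_matI dsi_dims)

lemma dsi_diag: "diagonal_mat (dsi D)"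
  unfolding diagonal_mat_def by auto

lemma dsi_comm: assumes D: "D \<in> carrier_mat n n" "diagonal_mat D"
  shows "D * dsi D = dsi D * D"
proof (rule eq_matI)
  fix i j assume "i < dim_row (dsi D * D)" "j < dim_col (dsi D * D)"
  then have i: "i < n" and j: "j < n" using D by auto
  show "(D * dsi D) $$ (i,j) = (dsi D * D) $$ (i,j)"
    using diag_mult_index[OF D(2,1) dsi_carrier[OF D(1)] i j]
      diag_mult_index[OF dsi_diag dsi_carrier[OF D(1)] D(1) i j] D i j
    unfolding diagonal_mat_def by auto
qed (use D in auto)

lemma dsi_refl1: assumes D: "D \<in> carrier_mat n n" "diagonal_mat D"
  shows "D * dsi D * D = D"
proof -
  have "D * dsi D * D = D * (dsi D * D)" using D by (intro assoc_mult_mat) auto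
  also have "\<dots> = D"
  proof (rule eq_matI)
    fix i j assume "i < dim_row D" "j < dim_col D"
    then have i: "i < n" and j: "j < n" using D by auto
    show "(D * (dsi D * D)) $$ (i,j) = D $$ (i,j)"
      using diag_mult_index[OF D(2,1) _ i j, of "dsi D * D"] mult_carrier_mat[OF dsi_carrier[OF D(1)] D(1)]
        diag_mult_index[OF dsi_diag dsi_carrier[OF D(1)] D(1) i j] D i j
      unfolding diagonal_mat_def by auto
  qed (use D in auto)
  finally show ?thesis .
qed

lemma dsi_refl2: assumes D: "D \<in> carrier_mat n n" "diagonal_mat D"
  shows "dsi D * D * dsi D = dsi D"
proof -
  have "dsi D * D * dsi D = dsi D * (D * dsi D)" using D by (intro assoc_mult_mat) auto
  also have "\<dots> = dsi D"
  proof (rule eq_matI)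
    fix i j assume "i < dim_row (dsi D)" "j < dim_col (dsi D)"
    then have i: "i < n" and j: "j < n" using D by auto
    show "(dsi D * (D * dsi D)) $$ (i,j) = dsi D $$ (i,j)"
      using diag_mult_index[OF dsi_diag dsi_carrier[OF D(1)] _ i j, of "D * dsi D"] mult_carrier_mat[OF D(1) dsi_carrier[OF D(1)]]
        diag_mult_index[OF D(2,1) dsi_carrier[OF D(1)] i j] D i j
      unfolding diagonal_mat_def by auto
  qed (use D in auto)
  finally show ?thesis .
qed

lemma dsi_dsi: assumes D: "D \<in> carrier_mat n n" "diagonal_mat D"
  shows "dsi (dsi D) = D"
  using D unfolding diagonal_mat_def by (intro eq_matI) auto

lemma conj_mult: assumes U: "unitary_mat n U" and A: "A \<in> carrier_mat n n" and B: "B \<in> carrier_mat n n"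
  shows "(U * A * ctrans U) * (U * B * ctrans U) = U * (A * B) * ctrans U"
proof -
  have Uc: "U \<in> carrier_mat n n" and UU: "ctrans U * U = 1\<^sub>m n" using U unfolding unitary_mat_def by auto
  have cU: "ctrans U \<in> carrier_mat n n" using Uc by simp
  have mc: "\<And>X Y. X \<in> carrier_mat n n \<Longrightarrow> Y \<in> carrier_mat n n \<Longrightarrow> X * Y \<in> carrier_mat n n"
    by simp
  have e: "ctrans U * (U * Z) = Z" if "Z \<in> carrier_mat n n" for Z
    using assoc_mult_mat[OF cU Uc that, symmetric] UU that by simp
  have "(U * A * ctrans U) * (U * B * ctrans U) = U * (A * (ctrans U * (U * (B * ctrans U))))"
    using Uc cU A B by (simp add: mc assoc_mult_mat[of _ n n _ n _ n])
  also have "\<dots> = U * (A * (B * ctrans U))" using e[of "B * ctrans U"] B cU by simp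
  also have "\<dots> = U * (A * B) * ctrans U"
    using Uc cU A B by (simp add: mc assoc_mult_mat[of _ n n _ n _ n])
  finally show ?thesis .
qed

lemma pinv_props: assumes U: "unitary_mat n U" and D: "D \<in> carrier_mat n n" "diagonal_mat D"
  and X: "X = U * D * ctrans U" and Y: "Y = U * dsi D * ctrans U"
  shows "X * Y = Y * X" "X * Y * X = X" "Y * X * Y = Y"
proof -
  have DP: "dsi D \<in> carrier_mat n n" using D by simp
  have DDP: "D * dsi D \<in> carrier_mat n n" using D DP by simp
  show "X * Y = Y * X" unfolding X Y conj_mult[OF U D(1) DP] conj_mult[OF U DP D(1)] dsi_comm[OF D] ..
  show "X * Y * X = X" unfolding X Y conj_mult[OF U D(1) DP] conj_mult[OF U DDP D(1)] dsi_refl1[OF D] ..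
  have "Y * X * Y = U * (dsi D * D * dsi D) * ctrans U"
    unfolding X Y conj_mult[OF U DP D(1)] using conj_mult[OF U _ DP, of "dsi D * D"] DP D by (simp add: assoc_mult_mat[of _ n n _ n _ n])
  then show "Y * X * Y = Y" unfolding dsi_refl2[OF D] Y .
qed

lemma gen_inv_unique:
  assumes X: "X \<in> carrier_mat n n" and Y1: "Y1 \<in> carrier_mat n n" and Y2: "Y2 \<in> carrier_mat n n"
  and c1: "X * Y1 = Y1 * X" and r1: "X * Y1 * X = X" and s1: "Y1 * X * Y1 = Y1"
  and c2: "X * Y2 = Y2 * X" and r2: "X * Y2 * X = X" and s2: "Y2 * X * Y2 = Y2"
  shows "Y1 = Y2"
proof -
  have a: "A * B * C = A * (B * C)" if "A \<in> carrier_mat n n" "B \<in> carrier_mat n n" "C \<in> carrier_mat n n" for A B C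
    using assoc_mult_mat[OF that] .
  have P1: "X * Y1 \<in> carrier_mat n n" and P2: "X * Y2 \<in> carrier_mat n n" using X Y1 Y2 by auto
  have "(X * Y1) * (X * Y2) = (Y1 * X) * (Y2 * X)" using c1 c2 by simp
  also have "\<dots> = Y1 * ((X * Y2) * X)" using X Y1 Y2 by (simp add: a)
  also have "\<dots> = Y1 * X" using r2 by simp
  finally have e1: "(X * Y1) * (X * Y2) = X * Y1" using c1 by simp
  have "(X * Y1) * (X * Y2) = (X * Y1 * X) * Y2" using X Y1 Y2 by (simp add: a)
  also have "\<dots> = X * Y2" using r1 by simp
  finally have e2: "X * Y1 = X * Y2" using e1 by simp
  have "Y1 = Y1 * (X * Y1)" using s1 X Y1 by (simp add: a)
  also have "\<dots> = Y1 * (X * Y2)" using e2 by simp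
  also have "\<dots> = (Y1 * X) * Y2" using X Y1 Y2 by (simp add: a)
  also have "\<dots> = (X * Y1) * Y2" using c1 by simp
  also have "\<dots> = (X * Y2) * Y2" using e2 by simp
  also have "\<dots> = Y2 * X * Y2" using c2 by simp
  also have "\<dots> = Y2" using s2 .
  finally show ?thesis .
qed

lemma supp_inv_eq: assumes U: "unitary_mat n U" and D: "D \<in> carrier_mat n n" "diagonal_mat D"
  and X: "X = U * D * ctrans U"
  shows "supp_inv n X = U * dsi D * ctrans U"
  unfolding supp_inv_def
proof (rule the_equality)
  show "\<exists>U' D'. unitary_mat n U' \<and> D' \<in> carrier_mat n n \<and> diagonal_mat D' \<and>
      X = U' * D' * ctrans U' \<and> U * dsi D * ctrans U = U' * dsi D' * ctrans U'"
    using U D X by blast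
  fix Y assume "\<exists>U' D'. unitary_mat n U' \<and> D' \<in> carrier_mat n n \<and> diagonal_mat D' \<and>
      X = U' * D' * ctrans U' \<and> Y = U' * dsi D' * ctrans U'"
  then obtain U' D' where U': "unitary_mat n U'" and D': "D' \<in> carrier_mat n n" "diagonal_mat D'"
    and X': "X = U' * D' * ctrans U'" and Y: "Y = U' * dsi D' * ctrans U'" by blast
  have Uc: "U \<in> carrier_mat n n" "U' \<in> carrier_mat n n" using U U' unfolding unitary_mat_def by auto
  have Xc: "X \<in> carrier_mat n n" using X Uc D by simp
  have Yc: "Y \<in> carrier_mat n n" using Y Uc D' by simp
  have Zc: "U * dsi D * ctrans U \<in> carrier_mat n n" using Uc D by simp
  note p1 = pinv_props[OF U' D' X' Y]
  note p2 = pinv_props[OF U D X refl]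
  show "Y = U * dsi D * ctrans U"
    by (rule gen_inv_unique[OF Xc Yc Zc p1 p2])
qed

lemma qf_unit: assumes D: "D \<in> carrier_mat n n" and i: "i < n"
  shows "qf D (unit_vec n i) = D $$ (i,i)"
proof -
  have "conjugate (unit_vec n i) = (unit_vec n i :: complex vec)"
    using i by (intro eq_vecI) auto
  then show ?thesis unfolding qf_def using D i by simp
qed

lemma psd_decomp: assumes X: "psd_mat n X"
  shows "\<exists>U D. unitary_mat n U \<and> D \<in> carrier_mat n n \<and> diagonal_mat D \<and> X = U * D * ctrans U
     \<and> (\<forall>i<n. Im (D $$ (i,i)) = 0 \<and> Re (D $$ (i,i)) \<ge> 0)"
proof -
  have Xc: "X \<in> carrier_mat n n" using psd_carrier[OF X] .
  obtain U D where U: "unitary_mat n U" and D: "D \<in> carrier_mat n n" "diagonal_mat D"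
    and XU: "X = U * D * ctrans U"
    using spectral[OF Xc psd_herm[OF X]] by blast
  have Uc: "U \<in> carrier_mat n n" and UU: "ctrans U * U = 1\<^sub>m n" using U unfolding unitary_mat_def by auto
  have "ctrans U * X * U = (ctrans U * U) * D * (ctrans U * U)"
    using conj_mult[OF U] unfolding XU using Uc D
    by (simp add: assoc_mult_mat[of _ n n _ n _ n])
  also have "\<dots> = D" unfolding UU using D by simp
  finally have "psd_mat n D" using psd_congr[OF X Uc] by simp
  then have "\<forall>i<n. Im (D $$ (i,i)) = 0 \<and> Re (D $$ (i,i)) \<ge> 0"
    using psdD[of n D] qf_unit[OF D(1)] by (metis unit_vec_carrier)
  then show ?thesis using U D XU by blast
qed



lemma pinv_psd:
  assumes X: "psd_mat n X"
  shows "supp_inv n X \<in> carrier_mat n n" "X * supp_inv n X = supp_inv n X * X"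
    "X * supp_inv n X * X = X" "supp_inv n X * X * supp_inv n X = supp_inv n X"
    "ctrans (supp_inv n X) = supp_inv n X" "psd_mat n (supp_inv n X)" "supp_inv n (supp_inv n X) = X"
proof -
  obtain U D where U: "unitary_mat n U" and D: "D \<in> carrier_mat n n" "diagonal_mat D"
    and XU: "X = U * D * ctrans U" and Dr: "\<forall>i<n. Im (D $$ (i,i)) = 0 \<and> Re (D $$ (i,i)) \<ge> 0"
    using psd_decomp[OF X] by blast
  have Uc: "U \<in> carrier_mat n n" using U unfolding unitary_mat_def by auto
  have DP: "dsi D \<in> carrier_mat n n" using D by simp
  have Xp: "supp_inv n X = U * dsi D * ctrans U" by (rule supp_inv_eq[OF U D XU])
  show Xpc: "supp_inv n X \<in> carrier_mat n n" unfolding Xp using Uc DP by simp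
  note pp = pinv_props[OF U D XU Xp]
  show "X * supp_inv n X = supp_inv n X * X" "X * supp_inv n X * X = X"
    "supp_inv n X * X * supp_inv n X = supp_inv n X" using pp by auto
  have cDP: "ctrans (dsi D) = dsi D"
  proof (rule eq_matI)
    fix i j assume "i < dim_row (dsi D)" "j < dim_col (dsi D)"
    then have i: "i < n" and j: "j < n" using D by auto
    have "cnj (D $$ (i,i)) = D $$ (i,i)" using Dr i by (simp add: complex_eq_iff)
    then show "ctrans (dsi D) $$ (i,j) = dsi D $$ (i,j)" using i j D by auto
  qed (use D in auto)
  have "ctrans (supp_inv n X) = ctrans (ctrans U) * ctrans (U * dsi D)"
    unfolding Xp by (rule ctrans_mult[of _ n n _ n]) (use Uc DP in auto)
  also have "\<dots> = U * (ctrans (dsi D) * ctrans U)"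
    using ctrans_mult[OF Uc DP] by simp
  also have "\<dots> = supp_inv n X" unfolding cDP Xp using Uc DP by (simp add: assoc_mult_mat[of _ n n _ n _ n])
  finally show cX: "ctrans (supp_inv n X) = supp_inv n X" .
  have "psd_mat n (ctrans (supp_inv n X) * X * supp_inv n X)" by (rule psd_congr[OF X Xpc])
  then show "psd_mat n (supp_inv n X)" unfolding cX using pp by simp
  have "supp_inv n (supp_inv n X) = U * dsi (dsi D) * ctrans U"
    by (rule supp_inv_eq[OF U DP dsi_diag Xp])
  then show "supp_inv n (supp_inv n X) = X" unfolding dsi_dsi[OF D] XU .
qed

lemma diag_mult_vec: assumes D: "D \<in> carrier_mat n n" "diagonal_mat D" and y: "y \<in> carrier_vec n" and i: "i < n"
  shows "(D *\<^sub>v y) $ i = D $$ (i,i) * y $ i"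
proof -
  have "(D *\<^sub>v y) $ i = (\<Sum>k<n. D $$ (i,k) * y $ k)"
    using D y i by (simp add: mult_mat_vec_def scalar_prod_def lessThan_atLeast0)
  also have "\<dots> = (\<Sum>k<n. if k = i then D $$ (i,i) * y $ i else 0)"
    using D i unfolding diagonal_mat_def by (intro sum.cong) auto
  also have "\<dots> = D $$ (i,i) * y $ i" using i by simp
  finally show ?thesis .
qed

lemma psd_qf_zero: assumes X: "psd_mat n X" and w: "w \<in> carrier_vec n" and q: "qf X w = 0"
  shows "X *\<^sub>v w = 0\<^sub>v n"
proof -
  obtain U D where U: "unitary_mat n U" and D: "D \<in> carrier_mat n n" "diagonal_mat D"
    and XU: "X = U * D * ctrans U" and Dr: "\<forall>i<n. Im (D $$ (i,i)) = 0 \<and> Re (D $$ (i,i)) \<ge> 0"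
    using psd_decomp[OF X] by blast
  have Uc: "U \<in> carrier_mat n n" using U unfolding unitary_mat_def by auto
  have cU: "ctrans U \<in> carrier_mat n n" using Uc by simp
  define y where "y = ctrans U *\<^sub>v w"
  have y: "y \<in> carrier_vec n" unfolding y_def using cU w by simp
  have "qf X w = qf D y" unfolding y_def XU using qf_congr[OF cU D(1) w] by simp
  also have "\<dots> = (\<Sum>i<n. cnj (y $ i) * (D $$ (i,i) * y $ i))"
  proof -
    have "D *\<^sub>v y = vec n (\<lambda>i. D $$ (i,i) * y $ i)"
      using diag_mult_vec[OF D y] D by (intro eq_vecI) auto
    then show ?thesis unfolding qf_def using y by (simp add: scalar_prod_def lessThan_atLeast0)
  qed
  also have "\<dots> = (\<Sum>i<n. complex_of_real (Re (D $$ (i,i)) * (cmod (y $ i))^2))"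
  proof (intro sum.cong refl)
    fix i assume "i \<in> {..<n}"
    then have i: "i < n" by simp
    have "D $$ (i,i) = complex_of_real (Re (D $$ (i,i)))" using Dr i by (simp add: complex_eq_iff)
    then show "cnj (y $ i) * (D $$ (i,i) * y $ i) = complex_of_real (Re (D $$ (i,i)) * (cmod (y $ i))^2)"
      by (metis (no_types, lifting) complex_norm_square mult.commute mult.left_commute of_real_mult)
  qed
  also have "\<dots> = complex_of_real (\<Sum>i<n. Re (D $$ (i,i)) * (cmod (y $ i))^2)" by simp
  finally have "complex_of_real (\<Sum>i<n. Re (D $$ (i,i)) * (cmod (y $ i))^2) = 0" using q by metis
  then have "(\<Sum>i<n. Re (D $$ (i,i)) * (cmod (y $ i))^2) = 0" by (simp only: of_real_eq_0_iff)
  moreover have "\<forall>i\<in>{..<n}. Re (D $$ (i,i)) * (cmod (y $ i))^2 \<ge> 0" using Dr by simp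
  ultimately have z: "\<forall>i\<in>{..<n}. Re (D $$ (i,i)) * (cmod (y $ i))^2 = 0"
    using sum_nonneg_eq_0_iff[of "{..<n}" "\<lambda>i. Re (D $$ (i,i)) * (cmod (y $ i))^2"] by simp
  have Dy: "D *\<^sub>v y = 0\<^sub>v n"
  proof (rule eq_vecI)
    fix i assume "i < dim_vec (0\<^sub>v n :: complex vec)"
    then have i: "i < n" by simp
    have "D $$ (i,i) = complex_of_real (Re (D $$ (i,i)))" using Dr i by (simp add: complex_eq_iff)
    moreover have "Re (D $$ (i,i)) = 0 \<or> y $ i = 0" using z i by simp
    ultimately show "(D *\<^sub>v y) $ i = 0\<^sub>v n $ i" using diag_mult_vec[OF D y i] i by auto
  qed (use D in auto)
  have "X *\<^sub>v w = U *\<^sub>v (D *\<^sub>v y)" unfolding XU y_def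
    using Uc D cU w mult_mat_vec_carrier[OF cU w] assoc_mult_mat_vec[of U n n D n "ctrans U *\<^sub>v w"] assoc_mult_mat_vec[of "U * D" n n "ctrans U" n w]
    by simp
  also have "\<dots> = 0\<^sub>v n" unfolding Dy using Uc by (intro eq_vecI) (auto simp: scalar_prod_def)
  finally show ?thesis .
qed



lemma (in vectorspace) subspace_dim_eq:
  assumes W1: "VectorSpace.subspace K W1 V" and W2: "VectorSpace.subspace K W2 V" and sub: "W1 \<subseteq> W2"
    and f1: "vectorspace.fin_dim K (vs W1)" and f2: "vectorspace.fin_dim K (vs W2)"
    and d: "vectorspace.dim K (vs W1) = vectorspace.dim K (vs W2)"
  shows "W2 \<subseteq> W1"
proof -
  interpret v1: vectorspace K "vs W1" using subspace_is_vs[OF W1] .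
  interpret v2: vectorspace K "vs W2" using subspace_is_vs[OF W2] .
  have sm1: "submodule K W1 V" using W1 by simp
  have sm2: "submodule K W2 V" using W2 by simp
  obtain b where fb: "finite b" and bb: "v1.basis b" using v1.finite_basis_exists[OF f1] by blast
  have cb: "card b = v1.dim" using v1.dim_basis[OF fb bb] by simp
  have bW1: "b \<subseteq> W1" using bb unfolding v1.basis_def by simp
  have bW2: "b \<subseteq> W2" using bW1 sub by blast
  have li1: "\<not> LinearCombinations.module.lin_dep K (vs W1) b" using bb unfolding v1.basis_def by simp
  then have li: "\<not> lin_dep b" using span_li_not_depend(2)[OF bW1 sm1] by simp
  then have li2: "\<not> LinearCombinations.module.lin_dep K (vs W2) b" using span_li_not_depend(2)[OF bW2 sm2] by simp
  have "v2.basis b"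
    by (rule v2.dim_li_is_basis[OF f2 fb]) (use bW2 li2 cb d in auto)
  then have "LinearCombinations.module.span K (vs W2) b = W2" unfolding v2.basis_def by simp
  then have "span b = W2" using span_li_not_depend(1)[OF bW2 sm2] by simp
  moreover have "span b \<subseteq> W1" by (rule span_is_subset[OF bW1 sm1])
  ultimately show ?thesis by simp
qed

lemma rank_colspace:
  fixes A B :: "complex mat"
  assumes A: "A \<in> carrier_mat n n" and B: "B \<in> carrier_mat n n"
  and sub: "\<And>x. x \<in> carrier_vec n \<Longrightarrow> \<exists>y \<in> carrier_vec n. A *\<^sub>v x = B *\<^sub>v y"
  and r: "mat_rank n A = mat_rank n B"
  and x: "x \<in> carrier_vec n"
  shows "\<exists>y \<in> carrier_vec n. B *\<^sub>v x = A *\<^sub>v y"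
proof -
  interpret vec_space "TYPE(complex)" n .
  have cA: "col_space A = {y \<in> carrier_vec n. \<exists>x\<in>carrier_vec n. A *\<^sub>v x = y}"
    using col_space_eq[OF A] A by simp
  have cB: "col_space B = {y \<in> carrier_vec n. \<exists>x\<in>carrier_vec n. B *\<^sub>v x = y}"
    using col_space_eq[OF B] B by simp
  have sA: "set (cols A) \<subseteq> carrier_vec n" using A cols_dim by (metis carrier_matD(1))
  have sB: "set (cols B) \<subseteq> carrier_vec n" using B cols_dim by (metis carrier_matD(1))
  have W1: "VectorSpace.subspace class_ring (col_space A) V" unfolding col_space_def using span_is_subspace[OF sA] by simp
  have W2: "VectorSpace.subspace class_ring (col_space B) V" unfolding col_space_def using span_is_subspace[OF sB] by simp
  have f1: "vectorspace.fin_dim class_ring (vs (col_space A))" unfolding col_space_def by (rule fin_dim_span_cols[OF A])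
  have f2: "vectorspace.fin_dim class_ring (vs (col_space B))" unfolding col_space_def by (rule fin_dim_span_cols[OF B])
  have d: "vectorspace.dim class_ring (vs (col_space A)) = vectorspace.dim class_ring (vs (col_space B))"
    using r unfolding mat_rank_def rank_def col_space_def by simp
  have s: "col_space A \<subseteq> col_space B"
    unfolding cA cB using sub by fastforce
  have "col_space B \<subseteq> col_space A" by (rule subspace_dim_eq[OF W1 W2 s f1 f2 d])
  moreover have "B *\<^sub>v x \<in> col_space B" unfolding cB using B x by auto
  ultimately have "B *\<^sub>v x \<in> {y \<in> carrier_vec n. \<exists>x\<in>carrier_vec n. A *\<^sub>v x = y}" using cA by blast
  then obtain y where "y \<in> carrier_vec n" "A *\<^sub>v y = B *\<^sub>v x" by blast
  then show ?thesis by metis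
qed



lemma minus_sq_carrier[simp]: "B \<in> carrier_mat n m \<Longrightarrow> A - B \<in> carrier_mat n m"
  by (rule minus_carrier_mat)

lemma fwd_ineq:
  assumes X: "psd_mat n X" and Y: "psd_mat n Y" and P: "X * supp_inv n X = Y * supp_inv n Y"
    and h: "psd_mat n (Y - complex_of_real k \<cdot>\<^sub>m X)" and k: "k \<ge> 0"
  shows "psd_mat n (supp_inv n X - complex_of_real k \<cdot>\<^sub>m supp_inv n Y)"
proof -
  define Xp where "Xp = supp_inv n X"
  define Z where "Z = supp_inv n Y"
  define kk where "kk = complex_of_real k"
  note px = pinv_psd[OF X, folded Xp_def]
  note py = pinv_psd[OF Y, folded Z_def]
  have Xc: "X \<in> carrier_mat n n" using psd_carrier[OF X] .
  have Yc: "Y \<in> carrier_mat n n" using psd_carrier[OF Y] .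
  have Xpc: "Xp \<in> carrier_mat n n" using px(1) .
  have Zc: "Z \<in> carrier_mat n n" using py(1) .
  have a: "A * B * C = A * (B * C)" if "A \<in> carrier_mat n n" "B \<in> carrier_mat n n" "C \<in> carrier_mat n n" for A B C
    using assoc_mult_mat[OF that] .
  have P': "X * Xp = Y * Z" using P unfolding Xp_def Z_def .
  have a1: "Z * X * Xp = Z"
  proof -
    have "Z * X * Xp = Z * (Y * Z)" using a[OF Zc Xc Xpc] P' by simp
    also have "\<dots> = Z * Y * Z" using a[OF Zc Yc Zc] by simp
    finally show ?thesis using py(4) by simp
  qed
  have a2: "Xp * X * Z = Z"
  proof -
    have "Xp * X * Z = (Z * Y) * Z" using px(2) P' py(2) by simp
    then show ?thesis using py(4) by simp
  qed
  have a3: "Xp * X * Xp = Xp" using px(4) .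
  define C where "C = kk \<cdot>\<^sub>m Z - Xp"
  define W where "W = Z * X * Z"
  have Cc: "C \<in> carrier_mat n n" unfolding C_def using Zc Xpc by simp
  have Wc: "W \<in> carrier_mat n n" unfolding W_def using Zc Xc by simp
  have cC: "ctrans C = C" unfolding C_def
    using ctrans_minus[of "kk \<cdot>\<^sub>m Z" n n Xp] Zc Xpc ctrans_smult_real[of k Z] py(5) px(5) kk_def by simp
  have CX: "C * X = kk \<cdot>\<^sub>m (Z * X) - Xp * X" unfolding C_def
    using minus_mult_distrib_mat[of "kk \<cdot>\<^sub>m Z" n n Xp X n] mult_smult_assoc_mat[OF Zc Xc] Zc Xpc Xc by simp
  have "C * X * C = kk \<cdot>\<^sub>m (Z * X) * C - Xp * X * C"
    unfolding CX using minus_mult_distrib_mat[of "kk \<cdot>\<^sub>m (Z * X)" n n "Xp * X" C n] Zc Xpc Xc Cc by simp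
  also have "kk \<cdot>\<^sub>m (Z * X) * C = kk \<cdot>\<^sub>m (kk \<cdot>\<^sub>m W - Z)"
  proof -
    have "kk \<cdot>\<^sub>m (Z * X) * C = kk \<cdot>\<^sub>m (Z * X * C)" using mult_smult_assoc_mat[of "Z * X" n n C n] Zc Xc Cc by simp
    also have "Z * X * C = Z * X * (kk \<cdot>\<^sub>m Z) - Z * X * Xp" unfolding C_def
      using mult_minus_distrib_mat[of "Z * X" n n "kk \<cdot>\<^sub>m Z" n Xp] Zc Xc Xpc by simp
    also have "Z * X * (kk \<cdot>\<^sub>m Z) = kk \<cdot>\<^sub>m W" unfolding W_def using mult_smult_distrib[of "Z * X" n n Z n] Zc Xc by simp
    finally show ?thesis using a1 by simp
  qed
  also have "Xp * X * C = kk \<cdot>\<^sub>m Z - Xp"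
  proof -
    have "Xp * X * C = Xp * X * (kk \<cdot>\<^sub>m Z) - Xp * X * Xp" unfolding C_def
      using mult_minus_distrib_mat[of "Xp * X" n n "kk \<cdot>\<^sub>m Z" n Xp] Zc Xc Xpc by simp
    also have "Xp * X * (kk \<cdot>\<^sub>m Z) = kk \<cdot>\<^sub>m Z" using mult_smult_distrib[of "Xp * X" n n Z n] Zc Xc Xpc a2 by simp
    finally show ?thesis using a3 by simp
  qed
  finally have CXC: "C * X * C = kk \<cdot>\<^sub>m (kk \<cdot>\<^sub>m W - Z) - (kk \<cdot>\<^sub>m Z - Xp)" .
  have "Z * (Y - kk \<cdot>\<^sub>m X) * Z = (Z * Y - kk \<cdot>\<^sub>m (Z * X)) * Z"
    using mult_minus_distrib_mat[of Z n n Y n "kk \<cdot>\<^sub>m X"] mult_smult_distrib[OF Zc Xc] Zc Yc Xc by simp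
  also have "\<dots> = Z * Y * Z - kk \<cdot>\<^sub>m (Z * X) * Z"
    using minus_mult_distrib_mat[of "Z * Y" n n "kk \<cdot>\<^sub>m (Z * X)" Z n] Zc Yc Xc by simp
  also have "\<dots> = Z - kk \<cdot>\<^sub>m W"
    unfolding W_def using py(4) mult_smult_assoc_mat[of "Z * X" n n Z n] Zc Xc by simp
  finally have ZYZ: "Z * (Y - kk \<cdot>\<^sub>m X) * Z = Z - kk \<cdot>\<^sub>m W" .
  have iden: "Xp - kk \<cdot>\<^sub>m Z = C * X * C + kk \<cdot>\<^sub>m (Z * (Y - kk \<cdot>\<^sub>m X) * Z)"
    unfolding CXC ZYZ using Xpc Zc Wc
    by (intro eq_matI) (auto simp: algebra_simps)
  have p1: "psd_mat n (C * X * C)" using psd_congr[OF X Cc] cC by simp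
  have p2: "psd_mat n (Z * (Y - kk \<cdot>\<^sub>m X) * Z)" using psd_congr[OF h[folded kk_def] Zc] py(5) by simp
  have "psd_mat n (C * X * C + kk \<cdot>\<^sub>m (Z * (Y - kk \<cdot>\<^sub>m X) * Z))"
    using psd_add[OF p1 psd_smult[OF p2 k]] kk_def by simp
  then show ?thesis using iden unfolding Xp_def Z_def kk_def by simp
qed



lemma mat_eq_by_vec: assumes A: "(A :: complex mat) \<in> carrier_mat n m" and B: "B \<in> carrier_mat n m"
  and e: "\<And>v. v \<in> carrier_vec m \<Longrightarrow> A *\<^sub>v v = B *\<^sub>v v"
  shows "A = B"
proof (rule eq_matI)
  fix i j assume "i < dim_row B" "j < dim_col B"
  then have i: "i < n" and j: "j < m" using B by auto
  have "A $$ (i,j) = (A *\<^sub>v unit_vec m j) $ i" using A i j by simp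
  also have "\<dots> = (B *\<^sub>v unit_vec m j) $ i" using e[of "unit_vec m j"] by simp
  also have "\<dots> = B $$ (i,j)" using B i j by simp
  finally show "A $$ (i,j) = B $$ (i,j)" .
qed (use A B in auto)

lemma rank_eq_colspace:
  fixes A B :: "complex mat"
  assumes A: "A \<in> carrier_mat n n" and B: "B \<in> carrier_mat n n"
  and s1: "\<And>x. x \<in> carrier_vec n \<Longrightarrow> \<exists>y \<in> carrier_vec n. A *\<^sub>v x = B *\<^sub>v y"
  and s2: "\<And>x. x \<in> carrier_vec n \<Longrightarrow> \<exists>y \<in> carrier_vec n. B *\<^sub>v x = A *\<^sub>v y"
  shows "mat_rank n A = mat_rank n B"
proof -
  interpret vec_space "TYPE(complex)" n .
  have cA: "col_space A = {y \<in> carrier_vec n. \<exists>x\<in>carrier_vec n. A *\<^sub>v x = y}"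
    using col_space_eq[OF A] A by simp
  have cB: "col_space B = {y \<in> carrier_vec n. \<exists>x\<in>carrier_vec n. B *\<^sub>v x = y}"
    using col_space_eq[OF B] B by simp
  have "col_space A = col_space B"
  proof
    show "col_space A \<subseteq> col_space B"
    proof
      fix z assume "z \<in> col_space A"
      then obtain x where x: "x \<in> carrier_vec n" and z: "z = A *\<^sub>v x" and zc: "z \<in> carrier_vec n"
        unfolding cA by auto
      obtain y where "y \<in> carrier_vec n" "A *\<^sub>v x = B *\<^sub>v y" using s1[OF x] by blast
      then show "z \<in> col_space B" unfolding cB using z zc by auto
    qed
    show "col_space B \<subseteq> col_space A"
    proof
      fix z assume "z \<in> col_space B"
      then obtain x where x: "x \<in> carrier_vec n" and z: "z = B *\<^sub>v x" and zc: "z \<in> carrier_vec n"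
        unfolding cB by auto
      obtain y where "y \<in> carrier_vec n" "B *\<^sub>v x = A *\<^sub>v y" using s2[OF x] by blast
      then show "z \<in> col_space A" unfolding cA using z zc by auto
    qed
  qed
  then show ?thesis unfolding mat_rank_def rank_def col_space_def by simp
qed

lemma rank_pinv: assumes X: "psd_mat n X"
  shows "mat_rank n (supp_inv n X) = mat_rank n X"
proof -
  define Xp where "Xp = supp_inv n X"
  note px = pinv_psd[OF X, folded Xp_def]
  have Xc: "X \<in> carrier_mat n n" using psd_carrier[OF X] .
  have Xpc: "Xp \<in> carrier_mat n n" using px(1) .
  have e1: "Xp = X * (Xp * Xp)"
  proof -
    have "X * (Xp * Xp) = X * Xp * Xp" using assoc_mult_mat[OF Xc Xpc Xpc] by simp
    also have "\<dots> = Xp * X * Xp" using px(2) by simp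
    finally show ?thesis using px(4) by simp
  qed
  have e2: "X = Xp * (X * X)"
  proof -
    have "Xp * (X * X) = Xp * X * X" using assoc_mult_mat[OF Xpc Xc Xc] by simp
    also have "\<dots> = X * Xp * X" using px(2) by simp
    finally show ?thesis using px(3) by simp
  qed
  show ?thesis unfolding Xp_def[symmetric]
  proof (rule rank_eq_colspace[OF Xpc Xc])
    fix x :: "complex vec" assume x: "x \<in> carrier_vec n"
    show "\<exists>y\<in>carrier_vec n. Xp *\<^sub>v x = X *\<^sub>v y"
      by (rule bexI[of _ "(Xp * Xp) *\<^sub>v x"]) (subst e1, use Xc Xpc x in \<open>auto simp: assoc_mult_mat_vec[of _ n n _ n]\<close>)
    show "\<exists>y\<in>carrier_vec n. X *\<^sub>v x = Xp *\<^sub>v y"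
      by (rule bexI[of _ "(X * X) *\<^sub>v x"]) (subst e2, use Xc Xpc x in \<open>auto simp: assoc_mult_mat_vec[of _ n n _ n]\<close>)
  qed
qed



lemma zero_mat_mult_vec[simp]: "v \<in> carrier_vec m \<Longrightarrow> (0\<^sub>m n m :: complex mat) *\<^sub>v v = 0\<^sub>v n"
  by (intro eq_vecI) (auto simp: mult_mat_vec_def scalar_prod_def)

lemma proj_eq:
  assumes X: "psd_mat n X" and Y: "psd_mat n Y" and k: "k > 0"
    and h: "psd_mat n (Y - complex_of_real k \<cdot>\<^sub>m X)" and r: "mat_rank n X = mat_rank n Y"
  shows "X * supp_inv n X = Y * supp_inv n Y"
proof -
  define Xp where "Xp = supp_inv n X"
  define Z where "Z = supp_inv n Y"
  note px = pinv_psd[OF X, folded Xp_def]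
  note py = pinv_psd[OF Y, folded Z_def]
  have Xc: "X \<in> carrier_mat n n" using psd_carrier[OF X] .
  have Yc: "Y \<in> carrier_mat n n" using psd_carrier[OF Y] .
  have Xpc: "Xp \<in> carrier_mat n n" using px(1) .
  have Zc: "Z \<in> carrier_mat n n" using py(1) .
  have a: "A * B * C = A * (B * C)" if "A \<in> carrier_mat n n" "B \<in> carrier_mat n n" "C \<in> carrier_mat n n" for A B C
    using assoc_mult_mat[OF that] .
  define P where "P = X * Xp"
  define Q where "Q = Y * Z"
  have Pc: "P \<in> carrier_mat n n" unfolding P_def using Xc Xpc by simp
  have Qc: "Q \<in> carrier_mat n n" unfolding Q_def using Yc Zc by simp
  have hP: "ctrans P = P" unfolding P_def using ctrans_mult[OF Xc Xpc] px(2,5) psd_herm[OF X] by simp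
  have hQ: "ctrans Q = Q" unfolding Q_def using ctrans_mult[OF Yc Zc] py(2,5) psd_herm[OF Y] by simp
  define M where "M = 1\<^sub>m n - Q"
  have Mc: "M \<in> carrier_mat n n" unfolding M_def using Qc by simp
  have YM: "Y * M = 0\<^sub>m n n"
  proof -
    have "Y * M = Y * 1\<^sub>m n - Y * Q" unfolding M_def using mult_minus_distrib_mat[OF Yc _ Qc] by simp
    also have "Y * Q = Y" unfolding Q_def using py(2) a[OF Yc Zc Yc] py(3) by simp
    finally show ?thesis using Yc by (intro eq_matI) auto
  qed
  have XMv: "X *\<^sub>v (M *\<^sub>v v) = 0\<^sub>v n" if v: "v \<in> carrier_vec n" for v
  proof -
    define u where "u = M *\<^sub>v v"
    have u: "u \<in> carrier_vec n" unfolding u_def using Mc v by simp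
    have "Y *\<^sub>v u = 0\<^sub>v n" unfolding u_def using assoc_mult_mat_vec[OF Yc Mc v, symmetric] YM v by simp
    then have qY: "qf Y u = 0" unfolding qf_def using u by simp
    have "qf (Y - complex_of_real k \<cdot>\<^sub>m X) u = - (complex_of_real k * qf X u)"
      using qf_minus[OF Yc _ u, of "complex_of_real k \<cdot>\<^sub>m X"] qf_smult[OF Xc u] qY Xc by simp
    then have "Re (- (complex_of_real k * qf X u)) \<ge> 0" using psdD(2)[OF h u] by simp
    then have "k * Re (qf X u) \<le> 0" by simp
    then have "Re (qf X u) \<le> 0" using k by (simp add: mult_le_0_iff)
    then have "qf X u = 0" using psdD[OF X u] by (simp add: complex_eq_iff)
    then show ?thesis using psd_qf_zero[OF X u] unfolding u_def by simp
  qed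
  have XM: "X * M = 0\<^sub>m n n"
    by (rule mat_eq_by_vec[of _ n n]) (use Xc Mc XMv in \<open>auto simp: assoc_mult_mat_vec[of _ n n _ n]\<close>)
  have XQ: "X * Q = X"
  proof -
    have "X * M = X * 1\<^sub>m n - X * Q" unfolding M_def using mult_minus_distrib_mat[OF Xc _ Qc] by simp
    then have "X - X * Q = 0\<^sub>m n n" using XM Xc by simp
    then have Z0: "X - X * Q = 0\<^sub>m n n" .
    show ?thesis
    proof (rule eq_matI)
      fix i j assume "i < dim_row X" "j < dim_col X"
      then have i: "i < n" and j: "j < n" using Xc by auto
      have "(X - X * Q) $$ (i,j) = 0" using Z0 i j by simp
      then show "(X * Q) $$ (i,j) = X $$ (i,j)" using i j Xc Qc by simp
    qed (use Xc Qc in auto)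
  qed
  have QX: "Q * X = X"
  proof -
    have "ctrans (X * Q) = ctrans Q * ctrans X" using ctrans_mult[OF Xc Qc] .
    then show ?thesis using XQ hQ psd_herm[OF X] by simp
  qed
  have sub: "\<exists>y \<in> carrier_vec n. X *\<^sub>v x = Y *\<^sub>v y" if x: "x \<in> carrier_vec n" for x
  proof (rule bexI[of _ "Z *\<^sub>v (X *\<^sub>v x)"])
    have "X *\<^sub>v x = (Q * X) *\<^sub>v x" using QX by simp
    also have "\<dots> = Y *\<^sub>v (Z *\<^sub>v (X *\<^sub>v x))" unfolding Q_def
      using Yc Zc Xc x by (simp add: assoc_mult_mat_vec[of _ n n _ n])
    finally show "X *\<^sub>v x = Y *\<^sub>v (Z *\<^sub>v (X *\<^sub>v x))" .
  qed (use Zc Xc x in simp)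
  have PY: "P * Y = Y"
  proof (rule mat_eq_by_vec[of _ n n])
    fix x :: "complex vec" assume x: "x \<in> carrier_vec n"
    obtain y where y: "y \<in> carrier_vec n" and Yx: "Y *\<^sub>v x = X *\<^sub>v y"
      using rank_colspace[OF Xc Yc sub r x] by blast
    have PX: "P * X = X" unfolding P_def using px(3) .
    have "(P * Y) *\<^sub>v x = P *\<^sub>v (X *\<^sub>v y)" using assoc_mult_mat_vec[OF Pc Yc x] Yx by simp
    also have "\<dots> = (P * X) *\<^sub>v y" using assoc_mult_mat_vec[OF Pc Xc y] by simp
    finally show "(P * Y) *\<^sub>v x = Y *\<^sub>v x" using PX Yx by simp
  qed (use Pc Yc in auto)
  have PQ: "P * Q = Q" unfolding Q_def using a[OF Pc Yc Zc, symmetric] PY by simp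
  have QP: "Q * P = P" unfolding P_def using a[OF Qc Xc Xpc, symmetric] QX by simp
  have "P = ctrans (Q * P)" using QP hP by simp
  also have "\<dots> = ctrans P * ctrans Q" using ctrans_mult[OF Qc Pc] .
  also have "\<dots> = Q" using hP hQ PQ by simp
  finally show ?thesis unfolding P_def Q_def Xp_def Z_def .
qed

lemma hyp_zero: assumes "psd_mat n X" and Yc: "Y \<in> carrier_mat n n"
  shows "k_hyponym n 0 X Y \<longleftrightarrow> psd_mat n Y"
proof -
  have Xc: "X \<in> carrier_mat n n" using psd_carrier[OF assms(1)] .
  have "Y - complex_of_real 0 \<cdot>\<^sub>m X = Y" using Yc Xc by (intro eq_matI) auto
  then show ?thesis unfolding k_hyponym_def by simp
qed

theorem mainTheorem1:
  fixes n :: nat and A B :: "complex mat" and k :: real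
  assumes "density_mat n A" and "density_mat n B"
    and "mat_rank n A = mat_rank n B"
    and "0 \<le> k" and "k \<le> 1"
  shows "k_hyponym n k A B \<longleftrightarrow> k_hyponym n k (supp_inv n B) (supp_inv n A)"
proof -
  have A: "psd_mat n A" and B: "psd_mat n B" using assms(1,2) unfolding density_mat_def by auto
  note pa = pinv_psd[OF A]
  note pb = pinv_psd[OF B]
  show ?thesis
  proof (cases "k = 0")
    case True
    show ?thesis unfolding True hyp_zero[OF A psd_carrier[OF B]] hyp_zero[OF pb(6) pa(1)] using B pa(6) by simp
  next
    case False
    then have k: "k > 0" using assms(4) by simp
    show ?thesis
    proof
      assume "k_hyponym n k A B"
      then have h: "psd_mat n (B - complex_of_real k \<cdot>\<^sub>m A)" unfolding k_hyponym_def .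
      have P: "A * supp_inv n A = B * supp_inv n B" by (rule proj_eq[OF A B k h assms(3)])
      show "k_hyponym n k (supp_inv n B) (supp_inv n A)"
        unfolding k_hyponym_def by (rule fwd_ineq[OF A B P h assms(4)])
    next
      assume "k_hyponym n k (supp_inv n B) (supp_inv n A)"
      then have h: "psd_mat n (supp_inv n A - complex_of_real k \<cdot>\<^sub>m supp_inv n B)" unfolding k_hyponym_def .
      have r: "mat_rank n (supp_inv n B) = mat_rank n (supp_inv n A)"
        using rank_pinv[OF A] rank_pinv[OF B] assms(3) by simp
      have P: "supp_inv n B * supp_inv n (supp_inv n B) = supp_inv n A * supp_inv n (supp_inv n A)"
        by (rule proj_eq[OF pb(6) pa(6) k h r])
      have "psd_mat n (supp_inv n (supp_inv n B) - complex_of_real k \<cdot>\<^sub>m supp_inv n (supp_inv n A))"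
        by (rule fwd_ineq[OF pb(6) pa(6) P h assms(4)])
      then show "k_hyponym n k A B" unfolding k_hyponym_def pa(7) pb(7) .
    qed
  qed
qed


end
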